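(* Let $G=(K\cup I,E)$ be a split graph and let $(V,\mathcal{F})$ be the split graph vertex shelling antimatroid defined on $G$. Then a subset $F\subseteq V$ is feasible (i.e. $F\in\mathcal{F}$) if and only if $N(F)$ induces a clique in $G$.
   Context: A split graph $G=(K\cup I,E)$ is a finite simple graph whose vertex set $V=K\cup I$ comes with a fixed partition into a clique $K$ and an independent set $I$ (either may be empty). We write $u\sim v$ if $u,v$ are adjacent. For $F\subseteq V$, $N(F)$ denotes the set of vertices $w\in V\setminus F$ adjacent to at least one vertex of $F$, and $N(v)=N(\{v\})$. A vertex is simplicial in a graph if its neighbours induce a clique. The split graph vertex shelling antimatroid of $G$ is the set system $(V,\mathcal{F})$ in which $F\subseteq V$ is feasible iff there is an ordering $f_1,\dots,f_{|F|}$ of $F$ such that for every $j$, $f_j$ is simplicial in the graph obtained from $G$ by deleting $f_1,\dots,f_{j-1}$ (the empty set is feasible). The empty vertex set counts as a clique. *)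

theory Defs
  imports Main
begin

definition simple_graph :: "'a set \<Rightarrow> ('a \<Rightarrow> 'a \<Rightarrow> bool) \<Rightarrow> bool" where
  "simple_graph V adj \<longleftrightarrow> finite V \<and>
     (\<forall>u v. adj u v \<longrightarrow> u \<in> V \<and> v \<in> V) \<and>
     (\<forall>u v. adj u v \<longrightarrow> adj v u) \<and> (\<forall>v. \<not> adj v v)"

definition is_clique :: "('a \<Rightarrow> 'a \<Rightarrow> bool) \<Rightarrow> 'a set \<Rightarrow> bool" where
  "is_clique adj C \<longleftrightarrow> (\<forall>u\<in>C. \<forall>v\<in>C. u \<noteq> v \<longrightarrow> adj u v)"

definition is_independent :: "('a \<Rightarrow> 'a \<Rightarrow> bool) \<Rightarrow> 'a set \<Rightarrow> bool" where
  "is_independent adj S \<longleftrightarrow> (\<forall>u\<in>S. \<forall>v\<in>S. \<not> adj u v)"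

definition split_graph :: "'a set \<Rightarrow> 'a set \<Rightarrow> ('a \<Rightarrow> 'a \<Rightarrow> bool) \<Rightarrow> bool" where
  "split_graph K I adj \<longleftrightarrow> simple_graph (K \<union> I) adj \<and> K \<inter> I = {} \<and>
     is_clique adj K \<and> is_independent adj I"

definition nbhd :: "'a set \<Rightarrow> ('a \<Rightarrow> 'a \<Rightarrow> bool) \<Rightarrow> 'a set \<Rightarrow> 'a set" where
  "nbhd V adj F = {w \<in> V - F. \<exists>f\<in>F. adj f w}"

definition simplicial_in :: "'a set \<Rightarrow> ('a \<Rightarrow> 'a \<Rightarrow> bool) \<Rightarrow> 'a \<Rightarrow> bool" where
  "simplicial_in W adj v \<longleftrightarrow> v \<in> W \<and> is_clique adj {u \<in> W. adj v u}"

definition shelling_feasible :: "'a set \<Rightarrow> ('a \<Rightarrow> 'a \<Rightarrow> bool) \<Rightarrow> 'a set \<Rightarrow> bool" where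
  "shelling_feasible V adj F \<longleftrightarrow> (\<exists>fs. distinct fs \<and> set fs = F \<and>
     (\<forall>j < length fs. simplicial_in (V - set (take j fs)) adj (fs ! j)))"

end

theory Submission
  imports Defs
begin

lemma take_not_in:
  assumes "distinct fs" "a \<le> b" "b < length fs"
  shows "fs ! b \<notin> set (take a fs)"
proof
  assume "fs ! b \<in> set (take a fs)"
  then obtain i where i: "i < length (take a fs)" "take a fs ! i = fs ! b"
    by (auto simp: in_set_conv_nth)
  then have "fs ! i = fs ! b" "i < a" by auto
  with assms show False using nth_eq_iff_index_eq[of fs i b] by auto
qed

lemma forward:
  assumes sg: "split_graph K I adj"
    and F: "F \<subseteq> K \<union> I"
    and feas: "shelling_feasible (K \<union> I) adj F"
  shows "is_clique adj (nbhd (K \<union> I) adj F)"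
proof -
  let ?V = "K \<union> I"
  from sg have sym: "\<And>u v. adj u v \<Longrightarrow> adj v u"
    and inV: "\<And>u v. adj u v \<Longrightarrow> u \<in> ?V \<and> v \<in> ?V"
    and Kc: "is_clique adj K" and Ii: "is_independent adj I"
    by (auto simp: split_graph_def simple_graph_def)
  have IK: "\<And>u v. adj u v \<Longrightarrow> u \<in> I \<Longrightarrow> v \<in> K"
    using inV Ii unfolding is_independent_def by blast
  from feas obtain fs where d: "distinct fs" and sfs: "set fs = F"
    and simp_: "\<And>j. j < length fs \<Longrightarrow> simplicial_in (?V - set (take j fs)) adj (fs ! j)"
    unfolding shelling_feasible_def by blast
  have L0: "\<And>x y k. k < length fs \<Longrightarrow> x \<in> ?V \<Longrightarrow> y \<in> ?V - set (take k fs) \<Longrightarrow> x \<notin> F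
      \<Longrightarrow> adj (fs!k) x \<Longrightarrow> adj (fs!k) y \<Longrightarrow> x \<noteq> y \<Longrightarrow> adj x y"
  proof -
    fix x y k assume k: "k < length fs" and x: "x \<in> ?V" "x \<notin> F"
      and y: "y \<in> ?V - set (take k fs)" and a: "adj (fs!k) x" "adj (fs!k) y" "x \<noteq> y"
    have "set (take k fs) \<subseteq> F" using sfs set_take_subset by metis
    then have "x \<in> ?V - set (take k fs)" using x by auto
    with simp_[OF k] y a show "adj x y" unfolding simplicial_in_def is_clique_def by blast
  qed
  have idx: "\<And>f. f \<in> F \<Longrightarrow> \<exists>k<length fs. fs ! k = f"
    using sfs by (auto simp: in_set_conv_nth)
  show ?thesis unfolding is_clique_def
  proof (intro ballI impI)
    fix u w assume u: "u \<in> nbhd ?V adj F" and w: "w \<in> nbhd ?V adj F" and uw: "u \<noteq> w"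
    from u obtain f where uV: "u \<in> ?V" "u \<notin> F" and f: "f \<in> F" "adj f u"
      unfolding nbhd_def by blast
    from w obtain g where wV: "w \<in> ?V" "w \<notin> F" and g: "g \<in> F" "adj g w"
      unfolding nbhd_def by blast
    obtain a where a: "a < length fs" "fs ! a = f" using idx f by blast
    obtain b where b: "b < length fs" "fs ! b = g" using idx g by blast
    have fu: "f \<noteq> u" "g \<noteq> w" "f \<noteq> w" "g \<noteq> u" using f g uV wV by auto
    have tk: "\<And>k x. x \<in> ?V \<Longrightarrow> x \<notin> F \<Longrightarrow> x \<in> ?V - set (take k fs)"
      using sfs set_take_subset by (metis DiffI subsetD)
    show "adj u w"
    proof (cases "u \<in> K")
      case uK: True
      show ?thesis
      proof (cases "w \<in> K")
        case True with uK uw Kc show ?thesis unfolding is_clique_def by blast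
      next
        case False
        then have "w \<in> I" using wV by auto
        then have "g \<in> K" using IK g sym by blast
        then have "adj g u" using uK Kc fu unfolding is_clique_def by blast
        then show ?thesis using L0[of b u w] b g uV wV tk uw by auto
      qed
    next
      case uI: False
      then have uI: "u \<in> I" using uV by auto
      then have fK: "f \<in> K" using IK f sym by blast
      show ?thesis
      proof (cases "w \<in> K")
        case True
        then have "adj f w" using fK Kc fu unfolding is_clique_def by blast
        then show ?thesis using L0[of a u w] a f uV wV tk uw by auto
      next
        case False
        then have "w \<in> I" using wV by auto
        then have gK: "g \<in> K" using IK g sym by blast
        show ?thesis
        proof (cases "adj f w")
          case True
          then show ?thesis using L0[of a u w] a f uV wV tk uw by auto
        next
          case nfw: False
          show ?thesis
          proof (cases "adj g u")
            case True
            then show ?thesis using L0[of b u w] b g uV wV tk uw by auto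
          next
            case ngu: False
            have fg: "f \<noteq> g" using nfw g by auto
            then have afg: "adj f g" using fK gK Kc unfolding is_clique_def by blast
            have "a \<noteq> b" using fg a b by auto
            then show ?thesis
            proof (cases "a < b")
              case True
              have "g \<in> ?V - set (take a fs)" using take_not_in[OF d, of a b] True b gK by auto
              then have "adj u g" using L0[of a u g] a f uV afg fu by auto
              then show ?thesis using L0[of b u w] b g uV wV tk uw sym by auto
            next
              case False
              then have ba: "b < a" using \<open>a \<noteq> b\<close> by auto
              have "f \<in> ?V - set (take b fs)" using take_not_in[OF d, of b a] ba a fK by auto
              then have "adj w f" using L0[of b w f] b g wV afg fu sym by auto
              then have "adj w u" using L0[of a w u] a f uV wV tk uw sym by auto
              then show ?thesis using sym by auto
            qed
          qed
        qed
      qed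
    qed
  qed
qed


lemma backward:
  assumes sg: "split_graph K I adj"
    and F: "F \<subseteq> K \<union> I"
    and cl: "is_clique adj (nbhd (K \<union> I) adj F)"
  shows "shelling_feasible (K \<union> I) adj F"
proof -
  let ?V = "K \<union> I"
  let ?N = "nbhd ?V adj F"
  from sg have sym: "\<And>u v. adj u v \<Longrightarrow> adj v u"
    and inV: "\<And>u v. adj u v \<Longrightarrow> u \<in> ?V \<and> v \<in> ?V"
    and irr: "\<And>v. \<not> adj v v"
    and Kc: "is_clique adj K" and Ii: "is_independent adj I"
    and disj: "K \<inter> I = {}" and fin: "finite ?V"
    by (auto simp: split_graph_def simple_graph_def)
  have IK: "\<And>u v. adj u v \<Longrightarrow> u \<in> I \<Longrightarrow> v \<in> K"
    using inV Ii unfolding is_independent_def by blast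
  have inN: "\<And>v p. v \<in> F \<Longrightarrow> p \<notin> F \<Longrightarrow> adj v p \<Longrightarrow> p \<in> ?N"
    using inV unfolding nbhd_def by blast
  define A where "A = F \<inter> I"
  define B where "B = {v \<in> F \<inter> K. \<not> (\<exists>x \<in> I - F. adj v x)}"
  define C where "C = F \<inter> K - B"
  have finF: "finite F" using fin F finite_subset by blast
  obtain as where as: "distinct as" "set as = A"
    using finite_distinct_list[of A] finF unfolding A_def by auto
  obtain bs where bs: "distinct bs" "set bs = B"
    using finite_distinct_list[of B] finF unfolding B_def by auto
  obtain cs where cs: "distinct cs" "set cs = C"
    using finite_distinct_list[of C] finF unfolding C_def by auto
  define fs where "fs = as @ bs @ cs"
  have AB: "A \<inter> B = {}" "A \<inter> C = {}" "B \<inter> C = {}"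
    using disj unfolding A_def B_def C_def by auto
  have d: "distinct fs" unfolding fs_def using as bs cs AB by auto
  have sfs: "set fs = F" unfolding fs_def using as bs cs F
    unfolding A_def B_def C_def by auto
  have cond: "\<And>j. j < length fs \<Longrightarrow>
      (fs!j \<in> K \<longrightarrow> A \<subseteq> set (take j fs)) \<and> (fs!j \<in> C \<longrightarrow> B \<subseteq> set (take j fs))"
  proof -
    fix j assume j: "j < length fs"
    show "(fs!j \<in> K \<longrightarrow> A \<subseteq> set (take j fs)) \<and> (fs!j \<in> C \<longrightarrow> B \<subseteq> set (take j fs))"
    proof (cases "j < length as")
      case True
      then have "fs ! j \<in> A" unfolding fs_def using as by (auto simp: nth_append)
      then show ?thesis using disj AB unfolding A_def by auto
    next
      case F1: False
      then have tA: "A \<subseteq> set (take j fs)" unfolding fs_def using as by auto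
      show ?thesis
      proof (cases "j < length as + length bs")
        case True
        then have "fs ! j \<in> B" unfolding fs_def using bs F1 by (auto simp: nth_append)
        then show ?thesis using tA AB by auto
      next
        case False
        then have "take j fs = as @ bs @ take (j - length as - length bs) cs"
          unfolding fs_def using F1 by auto
        then have "B \<subseteq> set (take j fs)" using bs by auto
        then show ?thesis using tA by auto
      qed
    qed
  qed
  have "\<forall>j < length fs. simplicial_in (?V - set (take j fs)) adj (fs ! j)"
  proof (intro allI impI)
    fix j assume j: "j < length fs"
    let ?R = "set (take j fs)"
    let ?v = "fs ! j"
    have vF: "?v \<in> F" using j sfs nth_mem by blast
    have vW: "?v \<in> ?V - ?R" using take_not_in[OF d, of j j] j vF F by auto
    have c1: "?v \<in> K \<longrightarrow> A \<subseteq> ?R" and c2: "?v \<in> C \<longrightarrow> B \<subseteq> ?R" using cond[OF j] by auto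
    have "is_clique adj {u \<in> ?V - ?R. adj ?v u}"
      unfolding is_clique_def
    proof (intro ballI impI)
      fix p q assume p: "p \<in> {u \<in> ?V - ?R. adj ?v u}" and q: "q \<in> {u \<in> ?V - ?R. adj ?v u}"
        and pq: "p \<noteq> q"
      show "adj p q"
      proof (cases "?v \<in> I")
        case True
        then have "p \<in> K" "q \<in> K" using IK p q by auto
        then show ?thesis using Kc pq unfolding is_clique_def by blast
      next
        case vK: False
        then have vK: "?v \<in> K" using vF F by auto
        then have AR: "A \<subseteq> ?R" using c1 by auto
        have Ichar: "\<And>x. x \<in> {u \<in> ?V - ?R. adj ?v u} \<Longrightarrow> x \<in> I \<Longrightarrow> x \<in> I - F \<and> x \<in> ?N"
        proof -
          fix x assume x: "x \<in> {u \<in> ?V - ?R. adj ?v u}" "x \<in> I"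
          then have "x \<notin> F" using AR unfolding A_def by auto
          then show "x \<in> I - F \<and> x \<in> ?N" using x inN[OF vF] by auto
        qed
        have KN: "\<And>x. x \<in> {u \<in> ?V - ?R. adj ?v u} \<Longrightarrow> x \<in> K \<Longrightarrow> x \<notin> F \<Longrightarrow> x \<in> ?N"
          using inN[OF vF] by auto
        have mixed: "\<And>p q. p \<in> {u \<in> ?V - ?R. adj ?v u} \<Longrightarrow> q \<in> {u \<in> ?V - ?R. adj ?v u}
             \<Longrightarrow> p \<in> I \<Longrightarrow> q \<in> K \<Longrightarrow> adj p q"
        proof -
          fix p q assume p: "p \<in> {u \<in> ?V - ?R. adj ?v u}" and q: "q \<in> {u \<in> ?V - ?R. adj ?v u}"
            and pI: "p \<in> I" and qK: "q \<in> K"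
          have pN: "p \<in> I - F" "p \<in> ?N" using Ichar[OF p pI] by auto
          have "?v \<notin> B" using pN p unfolding B_def by auto
          then have "?v \<in> C" using vF vK unfolding C_def by auto
          then have BR: "B \<subseteq> ?R" using c2 by auto
          have pq: "p \<noteq> q" using pI qK disj by auto
          show "adj p q"
          proof (cases "q \<in> F")
            case False
            then show ?thesis using KN[OF q qK] pN cl pq unfolding is_clique_def by blast
          next
            case True
            then have "q \<notin> B" using BR q by auto
            then obtain x where x: "x \<in> I - F" "adj q x" using True qK unfolding B_def by auto
            have xN: "x \<in> ?N" using inN[OF True] x by auto
            have "x = p"
            proof (rule ccontr)
              assume "x \<noteq> p"
              then have "adj x p" using cl xN pN unfolding is_clique_def by blast
              then show False using Ii x pI unfolding is_independent_def by blast
            qed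
            then show ?thesis using x sym by auto
          qed
        qed
        show ?thesis
        proof (cases "p \<in> I")
          case pI: True
          show ?thesis
          proof (cases "q \<in> I")
            case True
            then show ?thesis using Ichar[OF p pI] Ichar[OF q True] cl pq
              unfolding is_clique_def by blast
          next
            case False
            then have "q \<in> K" using q by auto
            then show ?thesis using mixed[OF p q pI] by auto
          qed
        next
          case pK: False
          then have pK: "p \<in> K" using p by auto
          show ?thesis
          proof (cases "q \<in> I")
            case True
            then show ?thesis using mixed[OF q p True pK] sym by auto
          next
            case False
            then have "q \<in> K" using q by auto
            then show ?thesis using pK Kc pq unfolding is_clique_def by blast
          qed
        qed
      qed
    qed
    then show "simplicial_in (?V - ?R) adj ?v" using vW unfolding simplicial_in_def by auto
  qed
  then show ?thesis unfolding shelling_feasible_def using d sfs by blast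
qed

theorem mainTheorem1:
  fixes K I :: "'a set" and adj :: "'a \<Rightarrow> 'a \<Rightarrow> bool" and F :: "'a set"
  assumes "split_graph K I adj"
    and "F \<subseteq> K \<union> I"
  shows "shelling_feasible (K \<union> I) adj F \<longleftrightarrow> is_clique adj (nbhd (K \<union> I) adj F)"
  using forward[OF assms] backward[OF assms] by blast

end
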